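(* Let $y\in\mathbb{R}$, $\beta>0$, and let $f$ be a function that is ordinal decreasing on $D=(y,y+\beta)$ and satisfies $f(x)>0$ for all $x\in D$. Then there exists $\varepsilon$ with $0<\varepsilon<\beta$ such that $x-f(x)<y$ for every $x$ with $y<x<y+\varepsilon$.
   Context: For $h:D\to\mathbb{R}$, a strictly decreasing sequence $x_1>x_2>\cdots$ in $D$ is $h$-bad if $h(x_1)>h(x_2)>\cdots$; $h$ is ordinal decreasing on $D$ if there is no infinite $h$-bad sequence in $D$. *)

theory Defs
  imports Main "HOL.Real"
begin

definition bad_seq :: "(real \<Rightarrow> real) \<Rightarrow> real set \<Rightarrow> (nat \<Rightarrow> real) \<Rightarrow> bool" where
  "bad_seq h D s \<longleftrightarrow> (\<forall>n. s n \<in> D) \<and> (\<forall>n. s (Suc n) < s n) \<and> (\<forall>n. h (s (Suc n)) < h (s n))"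

definition ordinal_decreasing :: "(real \<Rightarrow> real) \<Rightarrow> real set \<Rightarrow> bool" where
  "ordinal_decreasing h D \<longleftrightarrow> \<not> (\<exists>s. bad_seq h D s)"

end

theory Submission
  imports Defs
begin

theorem lemma5:
  fixes f :: "real \<Rightarrow> real" and y \<beta> :: real
  assumes "\<beta> > 0"
    and "ordinal_decreasing f {y<..<y + \<beta>}"
    and "\<forall>x \<in> {y<..<y + \<beta>}. f x > 0"
  shows "\<exists>\<epsilon>. 0 < \<epsilon> \<and> \<epsilon> < \<beta> \<and> (\<forall>x. y < x \<and> x < y + \<epsilon> \<longrightarrow> x - f x < y)"
proof (rule ccontr)
  assume N: "\<not> ?thesis"
  define P where "P = (\<lambda>(n::nat) x. x \<in> {y<..<y + \<beta>} \<and> f x \<le> x - y)"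
  have ex: "\<exists>x. P n x \<and> x < y + e" if "0 < e" "e < \<beta>" for n e
  proof -
    from N that obtain x where "y < x" "x < y + e" "\<not> x - f x < y" by blast
    thus ?thesis using that unfolding P_def by auto
  qed
  have "\<exists>x. P 0 x" using ex[of "\<beta>/2" 0] assms(1) by auto
  moreover have "\<exists>x'. P (Suc n) x' \<and> (x' < x \<and> f x' < f x)" if "P n x" for x n
  proof -
    have fx: "0 < f x" "f x \<le> x - y" using that assms(3) unfolding P_def by auto
    have "min (f x) (\<beta>/2) < \<beta>" "0 < min (f x) (\<beta>/2)" using fx assms(1) by auto
    then obtain x' where x': "P (Suc n) x'" "x' < y + min (f x) (\<beta>/2)"
      using ex[of "min (f x) (\<beta>/2)" "Suc n"] by blast
    have "f x' \<le> x' - y" using x' unfolding P_def by auto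
    thus ?thesis using x' fx by auto
  qed
  ultimately obtain s where s: "\<forall>n. P n (s n) \<and> (s (Suc n) < s n \<and> f (s (Suc n)) < f (s n))"
    using dependent_nat_choice[of P "\<lambda>n x x'. x' < x \<and> f x' < f x"] by blast
  hence "bad_seq f {y<..<y + \<beta>} s" unfolding bad_seq_def P_def by auto
  thus False using assms(2) unfolding ordinal_decreasing_def by blast
qed

end
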